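(* Let $m,n,s,k,c$ be positive integers such that $2\leq s\leq n$, $2\leq k\leq m$ and $ms=nk$. A $\mathrm{MS}^0_{\mathbb Z_{nkc}}(m,n;s,k;c)$ exists if and only if $nkc$ is odd.
   Context: Let $(\Gamma,+)$ be an abelian group and $\Omega\subseteq\Gamma$ with $|\Omega|>1$. A partially filled array is an array in which some cells may be empty. A zero-sum magic partially filled array set $\mathrm{MS}^0_\Omega(m,n;s,k;c)$ is a set of $c$ partially filled $m\times n$ arrays with entries in $\Omega$ such that every element of $\Omega$ appears exactly once in exactly one of the arrays, every array has exactly $s$ filled cells in each row and exactly $k$ in each column, and in every array the entries of each row and of each column sum to $0_\Gamma$. $\mathbb Z_N$ is the cyclic group of order $N$; here $\Omega=\Gamma=\mathbb Z_{nkc}$. *)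

theory Defs
  imports Main
begin

text \<open>A set of c partially filled m x n arrays with entries in Z_N (N = nkc), elements of
Z_N represented by their canonical residues 0..N-1. A i r j = Some v means cell (r,j) of
array i (i < c, r < m, j < n) is filled with v; None means empty.\<close>

definition is_MS0_Zmod :: "nat \<Rightarrow> nat \<Rightarrow> nat \<Rightarrow> nat \<Rightarrow> nat \<Rightarrow> nat \<Rightarrow>
    (nat \<Rightarrow> nat \<Rightarrow> nat \<Rightarrow> nat option) \<Rightarrow> bool" where
  "is_MS0_Zmod N m n s k c A \<longleftrightarrow>
     (\<forall>i r j. A i r j \<noteq> None \<longrightarrow> i < c \<and> r < m \<and> j < n)
   \<and> bij_betw (\<lambda>(i, r, j). the (A i r j)) {(i, r, j). A i r j \<noteq> None} {0..<N}
   \<and> (\<forall>i<c. \<forall>r<m. card {j. j < n \<and> A i r j \<noteq> None} = s)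
   \<and> (\<forall>i<c. \<forall>j<n. card {r. r < m \<and> A i r j \<noteq> None} = k)
   \<and> (\<forall>i<c. \<forall>r<m. (\<Sum>j\<in>{j. j < n \<and> A i r j \<noteq> None}. the (A i r j)) mod N = 0)
   \<and> (\<forall>i<c. \<forall>j<n. (\<Sum>r\<in>{r. r < m \<and> A i r j \<noteq> None}. the (A i r j)) mod N = 0)"

definition MS0_exists :: "nat \<Rightarrow> nat \<Rightarrow> nat \<Rightarrow> nat \<Rightarrow> nat \<Rightarrow> bool" where
  "MS0_exists m n s k c \<longleftrightarrow> (\<exists>A. is_MS0_Zmod (n * k * c) m n s k c A)"

end

theory Submission
  imports Defs
begin


lemma construct:
  fixes N m n s k c :: nat and F :: "nat \<Rightarrow> nat \<Rightarrow> bool" and V :: "nat \<Rightarrow> nat \<Rightarrow> nat \<Rightarrow> int"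
  assumes cardR: "\<And>r. r < m \<Longrightarrow> card {j. j < n \<and> F r j} = s"
  and cardC: "\<And>j. j < n \<Longrightarrow> card {r. r < m \<and> F r j} = k"
  and NN: "N = c * m * s"
  and range: "\<And>i r j. i < c \<Longrightarrow> r < m \<Longrightarrow> j < n \<Longrightarrow> F r j \<Longrightarrow> 0 \<le> V i r j \<and> V i r j < int N"
  and inj: "\<And>i r j i' r' j'. i<c \<Longrightarrow> r<m \<Longrightarrow> j<n \<Longrightarrow> F r j \<Longrightarrow> i'<c \<Longrightarrow> r'<m \<Longrightarrow> j'<n \<Longrightarrow> F r' j'
              \<Longrightarrow> V i r j = V i' r' j' \<Longrightarrow> i = i' \<and> r = r' \<and> j = j'"
  and rows: "\<And>i r. i<c \<Longrightarrow> r<m \<Longrightarrow> (\<Sum>j\<in>{j. j<n \<and> F r j}. V i r j) mod int N = 0"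
  and cols: "\<And>i j. i<c \<Longrightarrow> j<n \<Longrightarrow> (\<Sum>r\<in>{r. r<m \<and> F r j}. V i r j) mod int N = 0"
  shows "\<exists>A. is_MS0_Zmod N m n s k c A"
proof -
  define A where "A = (\<lambda>i r j. if i<c \<and> r<m \<and> j<n \<and> F r j then Some (nat (V i r j)) else None)"
  define S where "S = {(i, r, j). A i r j \<noteq> None}"
  have S_eq: "S = Sigma {..<c} (\<lambda>i. Sigma {..<m} (\<lambda>r. {j. j < n \<and> F r j}))"
    unfolding S_def A_def by auto
  have finS: "finite S" unfolding S_eq by (auto intro!: finite_SigmaI)
  have cardS: "card S = N"
  proof -
    have "card S = (\<Sum>i<c. \<Sum>r<m. card {j. j < n \<and> F r j})"
      unfolding S_eq by (simp add: card_SigmaI)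
    also have "\<dots> = (\<Sum>i<c. \<Sum>r<m. s)" using cardR by simp
    finally show ?thesis using NN by simp
  qed
  have bij: "bij_betw (\<lambda>(i, r, j). the (A i r j)) S {0..<N}"
  proof -
    let ?f = "\<lambda>(i, r, j). the (A i r j)"
    have f_eq: "\<And>i r j. (i,r,j) \<in> S \<Longrightarrow> ?f (i,r,j) = nat (V i r j)" unfolding S_eq A_def by auto
    have injf: "inj_on ?f S"
    proof (rule inj_onI)
      fix p q assume p: "p \<in> S" and q: "q \<in> S" and e: "?f p = ?f q"
      obtain i r j where pp: "p = (i,r,j)" by (cases p) auto
      obtain i' r' j' where qq: "q = (i',r',j')" by (cases q) auto
      have h1: "i<c" "r<m" "j<n" "F r j" using p unfolding pp S_eq by auto
      have h2: "i'<c" "r'<m" "j'<n" "F r' j'" using q unfolding qq S_eq by auto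
      have "nat (V i r j) = nat (V i' r' j')" using e f_eq p q pp qq by simp
      hence "V i r j = V i' r' j'" using range h1 h2 by (metis eq_nat_nat_iff)
      thus "p = q" using inj h1 h2 pp qq by blast
    qed
    have img: "?f ` S \<subseteq> {0..<N}"
    proof
      fix v assume "v \<in> ?f ` S"
      then obtain i r j where ij: "(i,r,j) \<in> S" "v = ?f (i,r,j)" by auto
      have h1: "i<c" "r<m" "j<n" "F r j" using ij unfolding S_eq by auto
      show "v \<in> {0..<N}" using ij f_eq range[OF h1] by auto
    qed
    have "?f ` S = {0..<N}"
      by (rule card_subset_eq) (use img card_image[OF injf] cardS in auto)
    thus ?thesis using injf unfolding bij_betw_def by blast
  qed
  have rowset: "\<And>i r. i<c \<Longrightarrow> r<m \<Longrightarrow> {j. j < n \<and> A i r j \<noteq> None} = {j. j<n \<and> F r j}"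
    unfolding A_def by auto
  have colset: "\<And>i j. i<c \<Longrightarrow> j<n \<Longrightarrow> {r. r < m \<and> A i r j \<noteq> None} = {r. r<m \<and> F r j}"
    unfolding A_def by auto
  have natsum: "\<And>X. (\<forall>x\<in>X. 0 \<le> f x) \<Longrightarrow> (\<Sum>x\<in>X. nat (f x)) mod N = 0 \<longleftrightarrow> (\<Sum>x\<in>X. f x) mod int N = 0"
    for f :: "nat \<Rightarrow> int"
  proof -
    fix X assume "\<forall>x\<in>X. 0 \<le> f x"
    hence "int (\<Sum>x\<in>X. nat (f x)) = (\<Sum>x\<in>X. f x)" by (simp add: of_nat_sum)
    thus "(\<Sum>x\<in>X. nat (f x)) mod N = 0 \<longleftrightarrow> (\<Sum>x\<in>X. f x) mod int N = 0"
      by (metis of_nat_0 of_nat_eq_iff zmod_int)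
  qed
  have R: "\<forall>i<c. \<forall>r<m. (\<Sum>j\<in>{j. j < n \<and> A i r j \<noteq> None}. the (A i r j)) mod N = 0"
  proof (intro allI impI)
    fix i r assume ir: "i<c" "r<m"
    have "(\<Sum>j\<in>{j. j < n \<and> A i r j \<noteq> None}. the (A i r j)) = (\<Sum>j\<in>{j. j<n \<and> F r j}. nat (V i r j))"
      unfolding rowset[OF ir] by (rule sum.cong) (auto simp: A_def ir)
    moreover have "\<forall>j\<in>{j. j<n \<and> F r j}. 0 \<le> V i r j" using range ir by auto
    ultimately show "(\<Sum>j\<in>{j. j < n \<and> A i r j \<noteq> None}. the (A i r j)) mod N = 0"
      using natsum rows[OF ir] by simp
  qed
  have C: "\<forall>i<c. \<forall>j<n. (\<Sum>r\<in>{r. r < m \<and> A i r j \<noteq> None}. the (A i r j)) mod N = 0"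
  proof (intro allI impI)
    fix i j assume ij: "i<c" "j<n"
    have "(\<Sum>r\<in>{r. r < m \<and> A i r j \<noteq> None}. the (A i r j)) = (\<Sum>r\<in>{r. r<m \<and> F r j}. nat (V i r j))"
      unfolding colset[OF ij] by (rule sum.cong) (auto simp: A_def ij)
    moreover have "\<forall>r\<in>{r. r<m \<and> F r j}. 0 \<le> V i r j" using range ij by auto
    ultimately show "(\<Sum>r\<in>{r. r < m \<and> A i r j \<noteq> None}. the (A i r j)) mod N = 0"
      using natsum cols[OF ij] by simp
  qed
  have "is_MS0_Zmod N m n s k c A"
    unfolding is_MS0_Zmod_def
    using bij R C cardR cardC rowset colset
    by (auto simp: S_def A_def split: if_splits)
  thus ?thesis by blast
qed



lemma gauss_nat_sum: "(\<Sum>v\<in>{0..<N::nat}. v) * 2 = N * (N - 1)"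
proof (induction N)
  case (Suc N) thus ?case by (cases N) (auto simp: algebra_simps)
qed simp

lemma necessity:
  assumes "is_MS0_Zmod N m n s k c A" and "0 < N"
  shows "odd N"
proof (rule ccontr)
  assume ev: "\<not> odd N"
  let ?S = "{(i, r, j). A i r j \<noteq> None}"
  have def: "\<forall>i r j. A i r j \<noteq> None \<longrightarrow> i < c \<and> r < m \<and> j < n"
    and bij: "bij_betw (\<lambda>(i, r, j). the (A i r j)) ?S {0..<N}"
    and rows: "\<forall>i<c. \<forall>r<m. (\<Sum>j\<in>{j. j < n \<and> A i r j \<noteq> None}. the (A i r j)) mod N = 0"
    using assms(1) unfolding is_MS0_Zmod_def by auto
  have S_eq: "?S = Sigma {..<c} (\<lambda>i. Sigma {..<m} (\<lambda>r. {j. j < n \<and> A i r j \<noteq> None}))"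
    using def by auto
  have "(\<Sum>p\<in>?S. (\<lambda>(i, r, j). the (A i r j)) p) = (\<Sum>v\<in>{0..<N}. v)"
    using sum.reindex_bij_betw[OF bij, of "\<lambda>v. v"] by simp
  moreover have "(\<Sum>p\<in>?S. (\<lambda>(i, r, j). the (A i r j)) p)
       = (\<Sum>i<c. \<Sum>r<m. \<Sum>j\<in>{j. j < n \<and> A i r j \<noteq> None}. the (A i r j))"
    unfolding S_eq by (simp add: sum.Sigma)
  moreover have "(\<Sum>i<c. \<Sum>r<m. \<Sum>j\<in>{j. j < n \<and> A i r j \<noteq> None}. the (A i r j)) mod N = 0"
  proof -
    have "(\<Sum>i<c. \<Sum>r<m. \<Sum>j\<in>{j. j < n \<and> A i r j \<noteq> None}. the (A i r j)) mod N
        = (\<Sum>i<c. (\<Sum>r<m. (\<Sum>j\<in>{j. j < n \<and> A i r j \<noteq> None}. the (A i r j)) mod N) mod N) mod N"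
      by (simp add: mod_sum_eq)
    also have "\<dots> = 0" using rows by simp
    finally show ?thesis .
  qed
  ultimately have z: "(\<Sum>v\<in>{0..<N}. v) mod N = 0" by simp
  obtain M where M: "N = 2 * M" using ev by auto
  have "M > 0" using assms(2) M by simp
  have "(\<Sum>v\<in>{0..<N}. v) = M * (2 * M - 1)"
    using gauss_nat_sum[of N] M by simp
  also have "\<dots> = N * (M - 1) + M" using M \<open>M > 0\<close>
    by (cases M) (auto simp: algebra_simps)
  finally have "(\<Sum>v\<in>{0..<N}. v) mod N = M mod N" by simp
  also have "\<dots> = M" using M \<open>M>0\<close> by simp
  finally show False using z \<open>M>0\<close> by simp
qed



definition tau :: "nat \<Rightarrow> nat \<Rightarrow> int" where
  "tau h t = (if t = 0 then -2 else if t = 1 then (if even h then 2 else 1) else if even t then -1 else 1)"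

definition wt :: "nat \<Rightarrow> nat \<Rightarrow> int" where
  "wt h p = tau h (if p \<le> h then h - p else p - h)"

lemma alt_sum: "1 \<le> (h::nat) \<Longrightarrow> (\<Sum>t\<in>{2..h}. (if even t then -1 else 1::int)) = (if even h then -1 else 0)"
proof (induction h)
  case 0 thus ?case by simp
next
  case (Suc h)
  show ?case
  proof (cases "h = 0")
    case True thus ?thesis by simp
  next
    case False
    hence "{2..Suc h} = insert (Suc h) {2..h}" by auto
    thus ?thesis using Suc False by simp
  qed
qed

lemma tau_tail: "1 \<le> (h::nat) \<Longrightarrow> (\<Sum>t\<in>{1..h}. tau h t) = 1"
proof -
  assume h: "1 \<le> h"
  have e: "{1..h} = insert 1 {2..h}" using h by auto
  have "(\<Sum>t\<in>{2..h}. tau h t) = (\<Sum>t\<in>{2..h}. (if even t then -1 else 1::int))"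
    by (rule sum.cong) (auto simp: tau_def)
  thus ?thesis using alt_sum[OF h] unfolding e by (simp add: tau_def)
qed

lemma sum_dist: "(\<Sum>p<2*h+1. f (if p \<le> h then h - p else p - h)) = f 0 + 2 * (\<Sum>t\<in>{1..h}. f t)"
  for f :: "nat \<Rightarrow> int"
proof -
  have sp: "{..<2*h+1} = {..<h} \<union> {h} \<union> {h+1..2*h}" by auto
  have a: "(\<Sum>p<h. f (if p \<le> h then h - p else p - h)) = (\<Sum>t\<in>{1..h}. f t)"
    by (rule sum.reindex_bij_witness[of _ "\<lambda>t. h - t" "\<lambda>p. h - p"]) auto
  have b: "(\<Sum>p\<in>{h+1..2*h}. f (if p \<le> h then h - p else p - h)) = (\<Sum>t\<in>{1..h}. f t)"
    by (rule sum.reindex_bij_witness[of _ "\<lambda>t. h + t" "\<lambda>p. p - h"]) auto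
  have "(\<Sum>p<2*h+1. f (if p \<le> h then h - p else p - h))
     = (\<Sum>p<h. f (if p \<le> h then h - p else p - h)) + f 0 + (\<Sum>p\<in>{h+1..2*h}. f (if p \<le> h then h - p else p - h))"
    unfolding sp by (subst sum.union_disjoint; auto)+
  thus ?thesis using a b by simp
qed

lemma wt_sum: "1 \<le> h \<Longrightarrow> (\<Sum>p<2*h+1. wt h p) = 0"
  unfolding wt_def using sum_dist[of "tau h" h] tau_tail[of h] by (simp add: tau_def)

lemma wt_sym: "p \<le> 2*h \<Longrightarrow> wt h (2*h - p) = wt h p"
  unfolding wt_def by (rule arg_cong[where f="tau h"]) auto

lemma antisym_sum:
  fixes f :: "nat \<Rightarrow> int"
  assumes "\<And>p. p \<le> 2*h \<Longrightarrow> f (2*h - p) = - f p"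
  shows "(\<Sum>p<2*h+1. f p) = 0"
proof -
  have "(\<Sum>p<2*h+1. f p) = (\<Sum>i<2*h+1. f (2*h+1 - Suc i))"
    by (rule sum.nat_diff_reindex[symmetric])
  also have "\<dots> = (\<Sum>i<2*h+1. - f i)"
    by (rule sum.cong) (auto simp: assms)
  finally show ?thesis by (simp add: sum_negf)
qed

lemma wt_esum: "1 \<le> h \<Longrightarrow> (\<Sum>p<2*h+1. int p * wt h p) = 0"
proof -
  assume h: "1 \<le> h"
  have "(\<Sum>p<2*h+1. (int p - int h) * wt h p) = 0"
  proof (rule antisym_sum)
    fix p assume p: "p \<le> 2*h"
    have "int (2*h - p) - int h = - (int p - int h)" using p by (simp add: of_nat_diff)
    thus "(int (2*h - p) - int h) * wt h (2*h - p) = - ((int p - int h) * wt h p)"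
      using wt_sym[OF p] by (simp add: algebra_simps)
  qed
  moreover have "(\<Sum>p<2*h+1. (int p - int h) * wt h p) = (\<Sum>p<2*h+1. int p * wt h p) - int h * (\<Sum>p<2*h+1. wt h p)"
    by (simp add: algebra_simps sum_subtractf sum_distrib_left)
  ultimately show ?thesis using wt_sum[OF h] by simp
qed

lemma wt_vals: "wt h p \<in> {-2, -1, 1, 2}"
  unfolding wt_def tau_def by auto

lemma coprime_small: "odd (M::int) \<Longrightarrow> x \<in> {-2,-1,1,2} \<Longrightarrow> coprime x M"
proof -
  assume o: "odd M" and x: "x \<in> {-2,-1,1,2}"
  have "coprime 2 M" using o by (simp add: coprime_commute)
  hence "coprime (-2) M" by simp
  thus ?thesis using x by auto
qed

lemma coprime_wt: "odd (M::int) \<Longrightarrow> coprime (wt h p) M"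
  using coprime_small wt_vals by blast

lemma affine_inj:
  fixes a b Q u1 u2 :: int
  assumes "coprime a Q" "0 \<le> u1" "u1 < Q" "0 \<le> u2" "u2 < Q"
    and "(a*u1 + b) mod Q = (a*u2 + b) mod Q"
  shows "u1 = u2"
proof -
  have "Q dvd (a*u1 + b) - (a*u2 + b)" using assms(6) by (simp add: mod_eq_dvd_iff)
  hence "Q dvd a * (u1 - u2)" by (simp add: algebra_simps)
  hence "Q dvd (u1 - u2)" using assms(1) by (simp add: coprime_commute coprime_dvd_mult_right_iff)
  hence "u1 mod Q = u2 mod Q" by (simp only: mod_eq_dvd_iff)
  thus ?thesis using assms by simp
qed

lemma mult_perm:
  fixes a :: int and s :: nat
  assumes "coprime a (int s)" "0 < s"
  shows "bij_betw (\<lambda>y. nat ((a * int y) mod int s)) {..<s} {..<s}"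
proof -
  let ?f = "\<lambda>y. nat ((a * int y) mod int s)"
  have inj: "inj_on ?f {..<s}"
  proof (rule inj_onI)
    fix x y assume "x \<in> {..<s}" "y \<in> {..<s}" "?f x = ?f y"
    hence e: "(a * int x + 0) mod int s = (a * int y + 0) mod int s"
      using assms(2) by (simp add: eq_nat_nat_iff)
    have "int x = int y"
      by (rule affine_inj[OF assms(1) _ _ _ _ e]) (use \<open>x \<in> {..<s}\<close> \<open>y \<in> {..<s}\<close> in auto)
    thus "x = y" by simp
  qed
  have img: "?f ` {..<s} \<subseteq> {..<s}"
  proof
    fix z assume "z \<in> ?f ` {..<s}"
    then obtain y where "z = ?f y" by auto
    moreover have "(a * int y) mod int s < int s" using assms(2) by simp
    moreover have "0 \<le> (a * int y) mod int s" using assms(2) by simp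
    ultimately show "z \<in> {..<s}" by (simp add: nat_less_iff)
  qed
  have "?f ` {..<s} = {..<s}"
    by (rule card_subset_eq) (use img card_image[OF inj] in auto)
  thus ?thesis using inj unfolding bij_betw_def by blast
qed



lemma etype_row:
  fixes g r e t :: nat
  assumes "0 < g" "e < g"
  shows "(int (g*t + (r+e) mod g) - int r) mod int g = int e"
    and "(g*t + (r+e) mod g) div g = t"
proof -
  have "int ((r+e) mod g) = (int r + int e) mod int g" by (simp add: zmod_int)
  hence "(int (g*t + (r+e) mod g) - int r) mod int g = (int g * int t + (int r + int e) mod int g - int r) mod int g"
    by simp
  also have "\<dots> = (int g * int t + (int r + int e) - int r) mod int g"
  proof -
    have "(int g * int t + (int r + int e) mod int g) mod int g = (int g * int t + (int r + int e)) mod int g"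
      by (rule mod_add_right_eq)
    thus ?thesis by (metis mod_diff_left_eq)
  qed
  also have "\<dots> = int e mod int g" by simp
  also have "\<dots> = int e" using assms by simp
  finally show "(int (g*t + (r+e) mod g) - int r) mod int g = int e" .
  show "(g*t + (r+e) mod g) div g = t" using assms by simp
qed

lemma row_param:
  fixes g d n' r :: nat
  assumes "0 < g" "d \<le> g"
  shows "bij_betw (\<lambda>(e,t). g*t + (r+e) mod g) ({..<d} \<times> {..<n'})
           {j. j < g*n' \<and> (int j - int r) mod int g < int d}"
proof (rule bij_betw_byWitness[where f'="\<lambda>j. (nat ((int j - int r) mod int g), j div g)"])
  show "\<forall>a\<in>{..<d} \<times> {..<n'}. (\<lambda>j. (nat ((int j - int r) mod int g), j div g)) ((\<lambda>(e,t). g*t + (r+e) mod g) a) = a"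
  proof
    fix a assume a: "a \<in> {..<d} \<times> {..<n'}"
    obtain e t where et: "a = (e,t)" "e < d" "t < n'" using a by auto
    have "e < g" using et assms by simp
    hence h1: "nat ((int (g*t + (r+e) mod g) - int r) mod int g) = e"
      and h2: "(g*t + (r+e) mod g) div g = t"
      using etype_row[where g=g and e=e and r=r and t=t] assms by simp_all
    show "(\<lambda>j. (nat ((int j - int r) mod int g), j div g)) ((\<lambda>(e,t). g*t + (r+e) mod g) a) = a"
      using et h1 h2 by simp
  qed
  show "\<forall>a'\<in>{j. j < g*n' \<and> (int j - int r) mod int g < int d}.
           (\<lambda>(e,t). g*t + (r+e) mod g) ((\<lambda>j. (nat ((int j - int r) mod int g), j div g)) a') = a'"
  proof
    fix j assume "j \<in> {j. j < g*n' \<and> (int j - int r) mod int g < int d}"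
    have "int ((r + nat ((int j - int r) mod int g)) mod g) = (int r + (int j - int r) mod int g) mod int g"
      using assms by (simp add: zmod_int)
    also have "\<dots> = (int r + (int j - int r)) mod int g" by (rule mod_add_right_eq)
    also have "\<dots> = int j mod int g" by simp
    also have "\<dots> = int (j mod g)" by (simp add: zmod_int)
    finally have "(r + nat ((int j - int r) mod int g)) mod g = j mod g" by simp
    thus "(\<lambda>(e,t). g*t + (r+e) mod g) ((\<lambda>j. (nat ((int j - int r) mod int g), j div g)) j) = j"
      by (simp add: mult.commute)
  qed
  show "(\<lambda>(e,t). g*t + (r+e) mod g) ` ({..<d} \<times> {..<n'}) \<subseteq> {j. j < g*n' \<and> (int j - int r) mod int g < int d}"
  proof
    fix j assume "j \<in> (\<lambda>(e,t). g*t + (r+e) mod g) ` ({..<d} \<times> {..<n'})"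
    then obtain e t where et: "e < d" "t < n'" "j = g*t + (r+e) mod g" by auto
    have "(r+e) mod g < g" using assms by simp
    hence "j < g * (t+1)" using et by simp
    also have "\<dots> \<le> g * n'" using et by (intro mult_le_mono2) simp
    finally have "j < g*n'" .
    moreover have "(int j - int r) mod int g = int e" using etype_row(1)[where g=g and e=e and r=r and t=t] et assms by simp
    ultimately show "j \<in> {j. j < g*n' \<and> (int j - int r) mod int g < int d}" using et by simp
  qed
  show "(\<lambda>j. (nat ((int j - int r) mod int g), j div g)) ` {j. j < g*n' \<and> (int j - int r) mod int g < int d} \<subseteq> {..<d} \<times> {..<n'}"
  proof
    fix p assume "p \<in> (\<lambda>j. (nat ((int j - int r) mod int g), j div g)) ` {j. j < g*n' \<and> (int j - int r) mod int g < int d}"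
    then obtain j where j: "j < g*n'" "(int j - int r) mod int g < int d" "p = (nat ((int j - int r) mod int g), j div g)" by auto
    have "j div g < n'" using j(1) assms by (simp add: div_less_iff_less_mult mult.commute)
    moreover have "nat ((int j - int r) mod int g) < d" using j(2) assms(1) by (simp add: nat_less_iff)
    ultimately show "p \<in> {..<d} \<times> {..<n'}" using j by auto
  qed
qed

lemma etype_col:
  fixes g j e q :: nat
  assumes "0 < g" "e < g"
  shows "(int j - int (g*q + nat ((int j - int e) mod int g))) mod int g = int e"
    and "(g*q + nat ((int j - int e) mod int g)) div g = q"
    and "int ((g*q + nat ((int j - int e) mod int g)) mod g) = (int j - int e) mod int g"
proof -
  have nn: "int (nat ((int j - int e) mod int g)) = (int j - int e) mod int g" using assms by simp
  have lt: "nat ((int j - int e) mod int g) < g" using assms by (simp add: nat_less_iff)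
  have "(int j - int (g*q + nat ((int j - int e) mod int g))) mod int g
      = (int j - int g * int q - (int j - int e) mod int g) mod int g" using nn by (simp add: algebra_simps)
  also have "\<dots> = (int j - int g * int q - (int j - int e)) mod int g"
    by (rule mod_diff_right_eq)
  also have "\<dots> = (int e + (- int q) * int g) mod int g" by (simp add: algebra_simps)
  also have "\<dots> = int e mod int g" by (rule mod_mult_self1)
  also have "\<dots> = int e" using assms by simp
  finally show "(int j - int (g*q + nat ((int j - int e) mod int g))) mod int g = int e" .
  show "(g*q + nat ((int j - int e) mod int g)) div g = q" using lt assms by simp
  show "int ((g*q + nat ((int j - int e) mod int g)) mod g) = (int j - int e) mod int g" using lt nn by simp
qed

lemma col_param:
  fixes g d m' j :: nat
  assumes "0 < g" "d \<le> g"
  shows "bij_betw (\<lambda>(e,q). g*q + nat ((int j - int e) mod int g)) ({..<d} \<times> {..<m'})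
           {r. r < g*m' \<and> (int j - int r) mod int g < int d}"
proof (rule bij_betw_byWitness[where f'="\<lambda>r. (nat ((int j - int r) mod int g), r div g)"])
  show "\<forall>a\<in>{..<d} \<times> {..<m'}. (\<lambda>r. (nat ((int j - int r) mod int g), r div g)) ((\<lambda>(e,q). g*q + nat ((int j - int e) mod int g)) a) = a"
  proof
    fix a assume a: "a \<in> {..<d} \<times> {..<m'}"
    obtain e q where eq: "a = (e,q)" "e < d" "q < m'" using a by auto
    have "e < g" using eq assms by simp
    hence h1: "nat ((int j - int (g*q + nat ((int j - int e) mod int g))) mod int g) = e"
      and h2: "(g*q + nat ((int j - int e) mod int g)) div g = q"
      using etype_col[where g=g and e=e and j=j and q=q] assms by simp_all
    show "(\<lambda>r. (nat ((int j - int r) mod int g), r div g)) ((\<lambda>(e,q). g*q + nat ((int j - int e) mod int g)) a) = a"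
      using eq h1 h2 by simp
  qed
  show "\<forall>a'\<in>{r. r < g*m' \<and> (int j - int r) mod int g < int d}.
           (\<lambda>(e,q). g*q + nat ((int j - int e) mod int g)) ((\<lambda>r. (nat ((int j - int r) mod int g), r div g)) a') = a'"
  proof
    fix r assume "r \<in> {r. r < g*m' \<and> (int j - int r) mod int g < int d}"
    have "(int j - int (nat ((int j - int r) mod int g))) mod int g = (int j - (int j - int r) mod int g) mod int g"
      using assms by simp
    also have "\<dots> = (int j - (int j - int r)) mod int g" by (rule mod_diff_right_eq)
    also have "\<dots> = int (r mod g)" by (simp add: zmod_int)
    finally have "nat ((int j - int (nat ((int j - int r) mod int g))) mod int g) = r mod g" by simp
    thus "(\<lambda>(e,q). g*q + nat ((int j - int e) mod int g)) ((\<lambda>r. (nat ((int j - int r) mod int g), r div g)) r) = r"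
      by (simp add: mult.commute)
  qed
  show "(\<lambda>(e,q). g*q + nat ((int j - int e) mod int g)) ` ({..<d} \<times> {..<m'}) \<subseteq> {r. r < g*m' \<and> (int j - int r) mod int g < int d}"
  proof
    fix r assume "r \<in> (\<lambda>(e,q). g*q + nat ((int j - int e) mod int g)) ` ({..<d} \<times> {..<m'})"
    then obtain e q where eq: "e < d" "q < m'" "r = g*q + nat ((int j - int e) mod int g)" by auto
    have "nat ((int j - int e) mod int g) < g" using assms by (simp add: nat_less_iff)
    hence "r < g * (q+1)" using eq by simp
    also have "\<dots> \<le> g * m'" using eq by (intro mult_le_mono2) simp
    finally have "r < g*m'" .
    moreover have "(int j - int r) mod int g = int e" using etype_col(1)[where g=g and e=e and j=j and q=q] eq assms by simp
    ultimately show "r \<in> {r. r < g*m' \<and> (int j - int r) mod int g < int d}" using eq by simp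
  qed
  show "(\<lambda>r. (nat ((int j - int r) mod int g), r div g)) ` {r. r < g*m' \<and> (int j - int r) mod int g < int d} \<subseteq> {..<d} \<times> {..<m'}"
  proof
    fix p assume "p \<in> (\<lambda>r. (nat ((int j - int r) mod int g), r div g)) ` {r. r < g*m' \<and> (int j - int r) mod int g < int d}"
    then obtain r where r: "r < g*m'" "(int j - int r) mod int g < int d" "p = (nat ((int j - int r) mod int g), r div g)" by auto
    have "r div g < m'" using r(1) assms by (simp add: div_less_iff_less_mult mult.commute)
    moreover have "nat ((int j - int r) mod int g) < d" using r(2) assms(1) by (simp add: nat_less_iff)
    ultimately show "p \<in> {..<d} \<times> {..<m'}" using r by auto
  qed
qed



lemma sum_mod_reduce:
  fixes X Y :: "'a \<Rightarrow> int" and D Q :: int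
  shows "(\<Sum>p\<in>A. X p + D * (Y p mod Q)) mod (D*Q) = (\<Sum>p\<in>A. X p + D * Y p) mod (D*Q)"
proof -
  have "(\<Sum>p\<in>A. X p + D * (Y p mod Q)) mod (D*Q) = (\<Sum>p\<in>A. (X p + D * (Y p mod Q)) mod (D*Q)) mod (D*Q)"
    by (rule mod_sum_eq[symmetric])
  also have "\<dots> = (\<Sum>p\<in>A. (X p + D * Y p) mod (D*Q)) mod (D*Q)"
  proof (rule arg_cong[where f="\<lambda>x. x mod (D*Q)"], rule sum.cong)
    fix p
    have "(X p + D * (Y p mod Q)) mod (D*Q) = (X p + (D * Y p) mod (D*Q)) mod (D*Q)"
      by (simp only: mult_mod_right)
    also have "\<dots> = (X p + D * Y p) mod (D*Q)" by (rule mod_add_right_eq)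
    finally show "(X p + D * (Y p mod Q)) mod (D*Q) = (X p + D * Y p) mod (D*Q)" .
  qed simp
  also have "\<dots> = (\<Sum>p\<in>A. X p + D * Y p) mod (D*Q)" by (rule mod_sum_eq)
  finally show ?thesis .
qed

lemma gauss_int: "(\<Sum>e<n. int e) * 2 = int n * (int n - 1)"
  by (induction n) (auto simp: algebra_simps)

lemma gauss_odd: "(\<Sum>e<2*h+1. int e) = int h * (2 * int h + 1)"
proof -
  have "(\<Sum>e<2*h+1. int e) * 2 = int (2*h+1) * (int (2*h+1) - 1)" by (rule gauss_int)
  thus ?thesis by (simp add: algebra_simps)
qed

lemma sum_delta0: "0 < (d::nat) \<Longrightarrow> (\<Sum>e<d. if e = (0::nat) then x else (0::int)) = x"
  by (simp add: sum.delta)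


lemma caseA:
  fixes g m' n' c h :: nat
  assumes g0: "0 < g" and dg: "2*h+1 \<le> g" and h1: "1 \<le> h" and mo: "odd m'"
    and oQ: "odd (c*(g*m')*n')" and c0: "0 < c" and m0: "0 < m'" and n0: "0 < n'"
  shows "\<exists>A. is_MS0_Zmod (c*(g*m')*((2*h+1)*n')) (g*m') (g*n') ((2*h+1)*n') ((2*h+1)*m') c A"
proof -
  define d where "d = 2*h+1"
  define Q where "Q = c*(g*m')*n'"
  have dg': "d \<le> g" and d0: "0 < d" using dg d_def by auto
  have oQi: "odd (int Q)" using oQ Q_def by simp
  have Q0: "0 < Q" using c0 g0 m0 n0 Q_def by simp
  have NdQ: "c*(g*m')*(d*n') = d*Q" by (simp add: Q_def algebra_simps)
  define ee where "ee = (\<lambda>r j::nat. nat ((int j - int r) mod int g))"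
  define bb where "bb = (\<lambda>e::nat. if e = 0 then - int h else (0::int))"
  define V where "V = (\<lambda>i r j. int (ee r j) + int d * ((wt h (ee r j) * int (c*(n'*r + j div g) + i) + bb (ee r j)) mod int Q))"
  define F where "F = (\<lambda>r j::nat. (int j - int r) mod int g < int d)"
  have wsum: "(\<Sum>e<d. wt h e) = 0" using wt_sum[OF h1] d_def by simp
  have wesum: "(\<Sum>e<d. wt h e * int e) = 0" using wt_esum[OF h1] d_def by (simp add: mult.commute)
  have esum: "(\<Sum>e<d. int e) = int h * int d" using gauss_odd[of h] d_def by simp
  have bsum: "(\<Sum>e<d. bb e) = - int h" unfolding bb_def using sum_delta0[OF d0] by simp
  have cardR: "\<And>r. r < g*m' \<Longrightarrow> card {j. j < g*n' \<and> F r j} = d*n'"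
  proof -
    fix r
    have "card ({..<d} \<times> {..<n'}) = card {j. j < g*n' \<and> F r j}"
      using bij_betw_same_card[OF row_param[OF g0 dg', of r n']] unfolding F_def .
    thus "card {j. j < g*n' \<and> F r j} = d*n'" by (simp add: card_cartesian_product)
  qed
  have cardC: "\<And>j. j < g*n' \<Longrightarrow> card {r. r < g*m' \<and> F r j} = d*m'"
  proof -
    fix j
    have "card ({..<d} \<times> {..<m'}) = card {r. r < g*m' \<and> F r j}"
      using bij_betw_same_card[OF col_param[OF g0 dg', of j m']] unfolding F_def .
    thus "card {r. r < g*m' \<and> F r j} = d*m'" by (simp add: card_cartesian_product)
  qed
  have eed: "\<And>r j. F r j \<Longrightarrow> ee r j < d"
    unfolding F_def ee_def using g0 by (simp add: nat_less_iff)
  have uQ: "\<And>i r j. i < c \<Longrightarrow> r < g*m' \<Longrightarrow> j < g*n' \<Longrightarrow> c*(n'*r + j div g) + i < Q"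
  proof -
    fix i r j assume a: "i < c" "r < g*m'" "j < g*n'"
    have t: "j div g < n'" using a(3) g0 by (simp add: div_less_iff_less_mult mult.commute)
    have "n'*r + j div g < n'*(r+1)" using t by simp
    also have "\<dots> \<le> n'*(g*m')" using a(2) by (intro mult_le_mono2) simp
    finally have X: "n'*r + j div g + 1 \<le> n'*(g*m')" by simp
    have "c*(n'*r + j div g) + i < c*(n'*r + j div g) + c" using a(1) by simp
    also have "\<dots> = c*(n'*r + j div g + 1)" by simp
    also have "\<dots> \<le> c*(n'*(g*m'))" using X by (intro mult_le_mono2)
    finally show "c*(n'*r + j div g) + i < Q" unfolding Q_def by (simp add: algebra_simps)
  qed
  have range: "\<And>i r j. i < c \<Longrightarrow> r < g*m' \<Longrightarrow> j < g*n' \<Longrightarrow> F r j \<Longrightarrow> 0 \<le> V i r j \<and> V i r j < int (c*(g*m')*(d*n'))"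
  proof -
    fix i r j assume a: "i < c" "r < g*m'" "j < g*n'" "F r j"
    define W where "W = (wt h (ee r j) * int (c*(n'*r + j div g) + i) + bb (ee r j)) mod int Q"
    have W: "0 \<le> W" "W \<le> int Q - 1" using Q0 unfolding W_def by auto
    have e: "int (ee r j) \<le> int d - 1" using eed[OF a(4)] by simp
    have dW: "int d * W \<le> int d * (int Q - 1)" using W by (intro mult_left_mono) auto
    have vw: "V i r j = int (ee r j) + int d * W" unfolding V_def W_def by simp
    have "V i r j \<le> int d - 1 + int d * (int Q - 1)" using vw dW e by linarith
    also have "\<dots> < int d * int Q" by (simp add: algebra_simps)
    moreover have "int d * int Q = int (c*(g*m')*(d*n'))" using NdQ by (metis of_nat_mult)
    ultimately have "V i r j < int (c*(g*m')*(d*n'))" by simp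
    moreover have "0 \<le> V i r j" using vw W by simp
    ultimately show "0 \<le> V i r j \<and> V i r j < int (c*(g*m')*(d*n'))" by simp
  qed
  have jmod: "\<And>r j. int (j mod g) = (int r + int (ee r j)) mod int g"
  proof -
    fix r j
    have "(int r + int (ee r j)) mod int g = (int r + (int j - int r) mod int g) mod int g"
      unfolding ee_def using g0 by simp
    also have "\<dots> = (int r + (int j - int r)) mod int g" by (rule mod_add_right_eq)
    also have "\<dots> = int (j mod g)" by (simp add: zmod_int)
    finally show "int (j mod g) = (int r + int (ee r j)) mod int g" by simp
  qed
  have inj: "\<And>i r j i' r' j'. i<c \<Longrightarrow> r<g*m' \<Longrightarrow> j<g*n' \<Longrightarrow> F r j \<Longrightarrow> i'<c \<Longrightarrow> r'<g*m' \<Longrightarrow> j'<g*n' \<Longrightarrow> F r' j'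
              \<Longrightarrow> V i r j = V i' r' j' \<Longrightarrow> i = i' \<and> r = r' \<and> j = j'"
  proof -
    fix i r j i' r' j'
    assume a: "i<c" "r<g*m'" "j<g*n'" "F r j" and b: "i'<c" "r'<g*m'" "j'<g*n'" "F r' j'"
      and eqV: "V i r j = V i' r' j'"
    define W where "W = (wt h (ee r j) * int (c*(n'*r + j div g) + i) + bb (ee r j)) mod int Q"
    define W' where "W' = (wt h (ee r' j') * int (c*(n'*r' + j' div g) + i') + bb (ee r' j')) mod int Q"
    have V1: "V i r j = int (ee r j) + int d * W" unfolding V_def W_def by simp
    have V2: "V i' r' j' = int (ee r' j') + int d * W'" unfolding V_def W'_def by simp
    have m1: "V i r j mod int d = int (ee r j)" using V1 eed[OF a(4)] by simp
    have m2: "V i' r' j' mod int d = int (ee r' j')" using V2 eed[OF b(4)] by simp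
    have ee: "ee r j = ee r' j'" using m1 m2 eqV by simp
    have "int (ee r j) + int d * W = int (ee r' j') + int d * W'" using V1 V2 eqV by simp
    hence "int d * W = int d * W'" using ee by simp
    hence WW: "W = W'" using d0 by simp
    have cop: "coprime (wt h (ee r j)) (int Q)" using coprime_wt[OF oQi] .
    have u1: "int (c*(n'*r + j div g) + i) < int Q" using uQ[OF a(1-3)] by (simp only: of_nat_less_iff)
    have u2: "int (c*(n'*r' + j' div g) + i') < int Q" using uQ[OF b(1-3)] by (simp only: of_nat_less_iff)
    have eqW: "(wt h (ee r j) * int (c*(n'*r + j div g) + i) + bb (ee r j)) mod int Q
             = (wt h (ee r j) * int (c*(n'*r' + j' div g) + i') + bb (ee r j)) mod int Q"
      using WW ee unfolding W_def W'_def by simp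
    have "int (c*(n'*r + j div g) + i) = int (c*(n'*r' + j' div g) + i')"
      by (rule affine_inj[OF cop of_nat_0_le_iff u1 of_nat_0_le_iff u2 eqW])
    hence u: "c*(n'*r + j div g) + i = c*(n'*r' + j' div g) + i'" by (simp only: of_nat_eq_iff)
    have m1: "(c*(n'*r + j div g) + i) mod c = i" using a(1) by simp
    have m2: "(c*(n'*r' + j' div g) + i') mod c = i'" using b(1) by simp
    have ii: "i = i'" using u m1 m2 by simp
    have X: "n'*r + j div g = n'*r' + j' div g" using u ii c0 by simp
    have t1: "j div g < n'" using a(3) g0 by (simp add: div_less_iff_less_mult mult.commute)
    have t2: "j' div g < n'" using b(3) g0 by (simp add: div_less_iff_less_mult mult.commute)
    have d1: "(n'*r + j div g) div n' = r" using t1 by simp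
    have d2: "(n'*r' + j' div g) div n' = r'" using t2 by simp
    have rr: "r = r'" using X d1 d2 by simp
    have tt: "j div g = j' div g" using X rr by simp
    have "int (j mod g) = int (j' mod g)" using jmod[of j r] jmod[of j' r'] rr ee by simp
    hence "j mod g = j' mod g" by simp
    hence "j = j'" using tt by (metis div_mult_mod_eq)
    thus "i = i' \<and> r = r' \<and> j = j'" using ii rr by simp
  qed
  have rows: "\<And>i r. i<c \<Longrightarrow> r<g*m' \<Longrightarrow> (\<Sum>j\<in>{j. j<g*n' \<and> F r j}. V i r j) mod int (c*(g*m')*(d*n')) = 0"
  proof -
    fix i r assume ir: "i < c" "r < g*m'"
    define U where "U = (\<lambda>t. int (c*(n'*r + t) + i))"
    define SU where "SU = (\<Sum>t<n'. U t)"
    have bij: "bij_betw (\<lambda>(e,t). g*t + (r+e) mod g) ({..<d} \<times> {..<n'}) {j. j < g*n' \<and> F r j}"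
      using row_param[OF g0 dg', of r n'] unfolding F_def .
    have "(\<Sum>j\<in>{j. j<g*n' \<and> F r j}. V i r j) = (\<Sum>p\<in>{..<d} \<times> {..<n'}. V i r ((\<lambda>(e,t). g*t + (r+e) mod g) p))"
      by (rule sum.reindex_bij_betw[OF bij, symmetric])
    also have "\<dots> = (\<Sum>p\<in>{..<d} \<times> {..<n'}. int (fst p) + int d * ((wt h (fst p) * U (snd p) + bb (fst p)) mod int Q))"
    proof (rule sum.cong)
      fix p assume p: "p \<in> {..<d} \<times> {..<n'}"
      obtain e t where et: "p = (e,t)" "e < d" "t < n'" using p by auto
      have "e < g" using et dg' by simp
      hence h1: "ee r (g*t + (r+e) mod g) = e" and h2: "(g*t + (r+e) mod g) div g = t"
        using etype_row[where g=g and e=e and r=r and t=t] g0 unfolding ee_def by simp_all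
      show "V i r ((\<lambda>(e,t). g*t + (r+e) mod g) p) = int (fst p) + int d * ((wt h (fst p) * U (snd p) + bb (fst p)) mod int Q)"
        unfolding V_def U_def using et h1 h2 by simp
    qed simp
    finally have S: "(\<Sum>j\<in>{j. j<g*n' \<and> F r j}. V i r j) = (\<Sum>p\<in>{..<d} \<times> {..<n'}. int (fst p) + int d * ((wt h (fst p) * U (snd p) + bb (fst p)) mod int Q))" .
    have "(\<Sum>p\<in>{..<d} \<times> {..<n'}. int (fst p) + int d * (wt h (fst p) * U (snd p) + bb (fst p)))
        = (\<Sum>e<d. \<Sum>t<n'. int e + int d * (wt h e * U t + bb e))"
      by (simp add: sum.cartesian_product')
    also have "\<dots> = (\<Sum>e<d. int n' * int e + int d * wt h e * SU + int d * int n' * bb e)"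
      unfolding SU_def by (rule sum.cong) (simp_all add: sum.distrib sum_distrib_left algebra_simps)
    also have "\<dots> = int n' * (\<Sum>e<d. int e) + int d * SU * (\<Sum>e<d. wt h e) + int d * int n' * (\<Sum>e<d. bb e)"
      by (simp add: sum.distrib sum_distrib_left sum_distrib_right algebra_simps)
    also have "\<dots> = 0" using wsum esum bsum by (simp add: algebra_simps)
    finally have Z: "(\<Sum>p\<in>{..<d} \<times> {..<n'}. int (fst p) + int d * (wt h (fst p) * U (snd p) + bb (fst p))) = 0" .
    have NN: "int (c*(g*m')*(d*n')) = int d * int Q" using NdQ by (metis of_nat_mult)
    show "(\<Sum>j\<in>{j. j<g*n' \<and> F r j}. V i r j) mod int (c*(g*m')*(d*n')) = 0"
      unfolding S NN sum_mod_reduce Z by simp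
  qed
  obtain hm where hm: "m' = 2*hm+1" using mo by (metis oddE)
  have Sq: "(\<Sum>q<m'. int q) = int hm * int m'" using gauss_odd[of hm] hm by simp
  have cols: "\<And>i j. i<c \<Longrightarrow> j<g*n' \<Longrightarrow> (\<Sum>r\<in>{r. r<g*m' \<and> F r j}. V i r j) mod int (c*(g*m')*(d*n')) = 0"
  proof -
    fix i j assume ij: "i < c" "j < g*n'"
    define t where "t = j div g"
    define D where "D = (\<lambda>e::nat. (int j - int e) div int g)"
    define L where "L = (\<lambda>e::nat. int c * (int n' * ((int j - int e) - int g * D e) + int t) + int i)"
    define Uc where "Uc = (\<lambda>e q::nat. int c * int n' * int g * int q + L e)"
    have bij: "bij_betw (\<lambda>(e,q). g*q + nat ((int j - int e) mod int g)) ({..<d} \<times> {..<m'}) {r. r < g*m' \<and> F r j}"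
      using col_param[OF g0 dg', of j m'] unfolding F_def .
    have "(\<Sum>r\<in>{r. r<g*m' \<and> F r j}. V i r j) = (\<Sum>p\<in>{..<d} \<times> {..<m'}. V i ((\<lambda>(e,q). g*q + nat ((int j - int e) mod int g)) p) j)"
      by (rule sum.reindex_bij_betw[OF bij, symmetric])
    also have "\<dots> = (\<Sum>p\<in>{..<d} \<times> {..<m'}. int (fst p) + int d * ((wt h (fst p) * Uc (fst p) (snd p) + bb (fst p)) mod int Q))"
    proof (rule sum.cong)
      fix p assume p: "p \<in> {..<d} \<times> {..<m'}"
      obtain e q where eq: "p = (e,q)" "e < d" "q < m'" using p by auto
      have "e < g" using eq dg' by simp
      hence h1: "ee (g*q + nat ((int j - int e) mod int g)) j = e"
        using etype_col(1)[where g=g and e=e and j=j and q=q] g0 unfolding ee_def by simp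
      have mm: "(int j - int e) mod int g = (int j - int e) - int g * D e"
        unfolding D_def by (metis minus_div_mult_eq_mod mult.commute)
      have nn: "int (nat ((int j - int e) mod int g)) = (int j - int e) mod int g" using g0 by simp
      have "int (g*q + nat ((int j - int e) mod int g)) = int g * int q + (int j - int e) mod int g"
        using nn by simp
      hence "int (g*q + nat ((int j - int e) mod int g)) = int g * int q + ((int j - int e) - int g * D e)"
        using mm by simp
      moreover define R where "R = g*q + nat ((int j - int e) mod int g)"
      ultimately have hR: "int R = int g * int q + ((int j - int e) - int g * D e)" by simp
      have "int (c*(n'*R + j div g) + i) = int c * (int n' * int R + int t) + int i"
        unfolding t_def by simp
      also have "\<dots> = Uc e q" unfolding Uc_def L_def hR by (simp add: algebra_simps)
      finally have h2: "int (c*(n'*(g*q + nat ((int j - int e) mod int g)) + j div g) + i) = Uc e q"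
        unfolding R_def .
      show "V i ((\<lambda>(e,q). g*q + nat ((int j - int e) mod int g)) p) j = int (fst p) + int d * ((wt h (fst p) * Uc (fst p) (snd p) + bb (fst p)) mod int Q)"
        unfolding V_def using eq h1 h2 by simp
    qed simp
    finally have S: "(\<Sum>r\<in>{r. r<g*m' \<and> F r j}. V i r j) = (\<Sum>p\<in>{..<d} \<times> {..<m'}. int (fst p) + int d * ((wt h (fst p) * Uc (fst p) (snd p) + bb (fst p)) mod int Q))" .
    define K where "K = int d * (int c * int n' * int g * (int hm * int m') + int m' * (int c * int n' * int j + int c * int t + int i))"
    define K2 where "K2 = int d * int m' * int c * int n'"
    have inner: "\<And>e. (\<Sum>q<m'. int e + int d * (wt h e * Uc e q + bb e))
        = int m' * int e + int d * int m' * bb e + K * wt h e - K2 * (wt h e * int e) - (K2 * int g) * (wt h e * D e)"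
    proof -
      fix e
      have "(\<Sum>q<m'. int e + int d * (wt h e * Uc e q + bb e))
          = int m' * int e + int d * wt h e * (int c * int n' * int g * (\<Sum>q<m'. int q) + int m' * L e) + int d * int m' * bb e"
        unfolding Uc_def by (simp add: sum.distrib sum_distrib_left algebra_simps)
      also have "\<dots> = int m' * int e + int d * int m' * bb e + K * wt h e - K2 * (wt h e * int e) - (K2 * int g) * (wt h e * D e)"
        unfolding Sq K_def K2_def L_def by (simp add: algebra_simps)
      finally show "(\<Sum>q<m'. int e + int d * (wt h e * Uc e q + bb e))
        = int m' * int e + int d * int m' * bb e + K * wt h e - K2 * (wt h e * int e) - (K2 * int g) * (wt h e * D e)" .
    qed
    have "(\<Sum>p\<in>{..<d} \<times> {..<m'}. int (fst p) + int d * (wt h (fst p) * Uc (fst p) (snd p) + bb (fst p)))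
        = (\<Sum>e<d. \<Sum>q<m'. int e + int d * (wt h e * Uc e q + bb e))"
      by (simp add: sum.cartesian_product')
    also have "\<dots> = (\<Sum>e<d. int m' * int e + int d * int m' * bb e + K * wt h e - K2 * (wt h e * int e) - (K2 * int g) * (wt h e * D e))"
      using inner by simp
    also have "\<dots> = int m' * (\<Sum>e<d. int e) + int d * int m' * (\<Sum>e<d. bb e) + K * (\<Sum>e<d. wt h e)
                   - K2 * (\<Sum>e<d. wt h e * int e) - (K2 * int g) * (\<Sum>e<d. wt h e * D e)"
      by (simp add: sum.distrib sum_subtractf sum_distrib_left)
    also have "\<dots> = (int d * int Q) * (- (\<Sum>e<d. wt h e * D e))"
      using wsum wesum esum bsum unfolding K2_def Q_def by (simp add: algebra_simps)
    finally have Z: "(\<Sum>p\<in>{..<d} \<times> {..<m'}. int (fst p) + int d * (wt h (fst p) * Uc (fst p) (snd p) + bb (fst p)))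
        = (int d * int Q) * (- (\<Sum>e<d. wt h e * D e))" .
    have NN: "int (c*(g*m')*(d*n')) = int d * int Q" using NdQ by (metis of_nat_mult)
    show "(\<Sum>r\<in>{r. r<g*m' \<and> F r j}. V i r j) mod int (c*(g*m')*(d*n')) = 0"
      unfolding S NN sum_mod_reduce Z by simp
  qed
  have main: "\<exists>A. is_MS0_Zmod (c*(g*m')*(d*n')) (g*m') (g*n') (d*n') (d*m') c A"
    by (rule construct[OF cardR cardC refl range inj rows cols])
  thus ?thesis unfolding d_def .
qed



lemma crt_bij:
  fixes k s :: nat
  assumes "coprime k s" "0 < k" "0 < s"
  shows "bij_betw (\<lambda>z. (z mod k, z mod s)) {..<k*s} ({..<k} \<times> {..<s})"
proof -
  let ?f = "\<lambda>z. (z mod k, z mod s)"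
  have inj: "inj_on ?f {..<k*s}"
  proof (rule inj_onI)
    fix z1 z2 assume z: "z1 \<in> {..<k*s}" "z2 \<in> {..<k*s}" "?f z1 = ?f z2"
    have "int z1 mod int k = int z2 mod int k" "int z1 mod int s = int z2 mod int s"
      using z(3) by (simp_all add: zmod_int[symmetric])
    hence "int k dvd int z1 - int z2" "int s dvd int z1 - int z2" by (simp_all add: mod_eq_dvd_iff)
    moreover have "coprime (int k) (int s)" using assms(1) by simp
    ultimately have "int k * int s dvd int z1 - int z2" by (rule divides_mult[rotated -1, rotated])
    hence "(int z1 - int z2) mod (int k * int s) = 0" by simp
    hence "int z1 mod (int k * int s) = int z2 mod (int k * int s)" by (simp only: mod_eq_dvd_iff dvd_eq_mod_eq_0)
    moreover have "int z1 < int k * int s" "int z2 < int k * int s" using z by (simp_all add: of_nat_mult[symmetric] del: of_nat_mult)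
    ultimately show "z1 = z2" by simp
  qed
  have img: "?f ` {..<k*s} \<subseteq> {..<k} \<times> {..<s}" using assms by auto
  have "?f ` {..<k*s} = {..<k} \<times> {..<s}"
    by (rule card_subset_eq) (use img card_image[OF inj] in \<open>auto simp: card_cartesian_product\<close>)
  thus ?thesis using inj unfolding bij_betw_def by blast
qed

lemma gauss_nat_sum2: "(\<Sum>v<N. v) * 2 = N * (N - (1::nat))"
proof (induction N)
  case (Suc N) thus ?case by (cases N) (auto simp: algebra_simps)
qed simp

lemma sum_div_dvd:
  fixes f :: "'a \<Rightarrow> nat"
  assumes "\<And>a. a \<in> A \<Longrightarrow> D dvd f a"
  shows "(\<Sum>a\<in>A. f a div D) = (\<Sum>a\<in>A. f a) div D"
proof (cases "D = 0")
  case True thus ?thesis by simp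
next
  case False
  have "(\<Sum>a\<in>A. f a) = (\<Sum>a\<in>A. D * (f a div D))"
    by (rule sum.cong) (use assms in auto)
  also have "\<dots> = D * (\<Sum>a\<in>A. f a div D)" by (simp add: sum_distrib_left)
  finally show ?thesis using False by simp
qed


locale caseB_loc =
  fixes hk hs :: nat
  assumes hk1: "1 \<le> hk" and hs1: "1 \<le> hs" and cop: "coprime (2*hk+1) (2*hs+1)"
begin

abbreviation "kk \<equiv> 2*hk+1"
abbreviation "ss \<equiv> 2*hs+1"

definition bbf :: "nat \<Rightarrow> nat \<Rightarrow> nat" where
  "bbf x y = nat ((wt hk x * int y) mod int ss)"
definition aaf :: "nat \<Rightarrow> nat \<Rightarrow> nat" where
  "aaf x y = nat (((int x - int hk) * wt hs (bbf x y)) mod int kk)"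
definition phi :: "nat \<Rightarrow> nat \<Rightarrow> nat" where
  "phi x y = inv_into {..<kk*ss} (\<lambda>z. (z mod kk, z mod ss)) (aaf x y, bbf x y)"

lemma bbf_lt: "bbf x y < ss" unfolding bbf_def by (simp add: nat_less_iff)
lemma aaf_lt: "aaf x y < kk" unfolding aaf_def by (simp add: nat_less_iff)
lemma int_bbf: "int (bbf x y) = (wt hk x * int y) mod int ss" unfolding bbf_def by simp
lemma int_aaf: "int (aaf x y) = ((int x - int hk) * wt hs (bbf x y)) mod int kk" unfolding aaf_def by simp

lemma crt: "bij_betw (\<lambda>z. (z mod kk, z mod ss)) {..<kk*ss} ({..<kk} \<times> {..<ss})"
  using crt_bij[OF cop] by simp

lemma phi_props: "phi x y < kk*ss" "phi x y mod kk = aaf x y" "phi x y mod ss = bbf x y"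
proof -
  have m: "(aaf x y, bbf x y) \<in> (\<lambda>z. (z mod kk, z mod ss)) ` {..<kk*ss}"
    using crt aaf_lt bbf_lt unfolding bij_betw_def by auto
  show "phi x y < kk*ss" unfolding phi_def using inv_into_into[OF m] by simp
  have "(\<lambda>z. (z mod kk, z mod ss)) (phi x y) = (aaf x y, bbf x y)"
    unfolding phi_def by (rule f_inv_into_f[OF m])
  thus "phi x y mod kk = aaf x y" "phi x y mod ss = bbf x y" by simp_all
qed

lemma phi_mod_k: "int (phi x y) mod int kk = ((int x - int hk) * wt hs (bbf x y)) mod int kk"
proof -
  have "int (phi x y) mod int kk = int (phi x y mod kk)" by (simp only: zmod_int)
  also have "\<dots> = int (aaf x y)" by (simp only: phi_props)
  finally show ?thesis by (simp only: int_aaf)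
qed

lemma phi_mod_s: "int (phi x y) mod int ss = (wt hk x * int y) mod int ss"
proof -
  have "int (phi x y) mod int ss = int (phi x y mod ss)" by (simp only: zmod_int)
  also have "\<dots> = int (bbf x y)" by (simp only: phi_props)
  finally show ?thesis by (simp only: int_bbf)
qed

lemma bbf_perm: "bij_betw (bbf x) {..<ss} {..<ss}"
proof -
  have "coprime (wt hk x) (int ss)" by (rule coprime_wt) simp
  thus ?thesis using mult_perm[of "wt hk x" ss] unfolding bbf_def by simp
qed

lemma phi_inj:
  assumes "x < kk" "y < ss" "x' < kk" "y' < ss" "phi x y = phi x' y'"
  shows "x = x' \<and> y = y'"
proof -
  have b: "bbf x y = bbf x' y'" and a: "aaf x y = aaf x' y'"
    using phi_props[of x y] phi_props[of x' y'] assms(5) by metis+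
  define b0 where "b0 = bbf x y"
  have cop1: "coprime (wt hs b0) (int kk)" by (rule coprime_wt) simp
  have "(wt hs b0 * int x + (- wt hs b0 * int hk)) mod int kk = (wt hs b0 * int x' + (- wt hs b0 * int hk)) mod int kk"
    using arg_cong[OF a, of int] b unfolding int_aaf b0_def by (simp add: algebra_simps)
  hence "int x = int x'" by (rule affine_inj[OF cop1, rotated 4]) (use assms in auto)
  hence xx: "x = x'" by simp
  have cop2: "coprime (wt hk x) (int ss)" by (rule coprime_wt) simp
  have "(wt hk x * int y + 0) mod int ss = (wt hk x * int y' + 0) mod int ss"
    using arg_cong[OF b, of int] xx unfolding int_bbf by simp
  hence "int y = int y'" by (rule affine_inj[OF cop2, rotated 4]) (use assms in auto)
  thus ?thesis using xx by simp
qed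

lemma sum_wt_bbf: "(\<Sum>y<ss. wt hs (bbf x y)) = 0"
proof -
  have "(\<Sum>y<ss. wt hs (bbf x y)) = (\<Sum>b<ss. wt hs b)"
    by (rule sum.reindex_bij_betw[OF bbf_perm])
  thus ?thesis using wt_sum[OF hs1] by simp
qed

lemma sum_bbf_row: "(\<Sum>y<ss. bbf x y) = (\<Sum>b<ss. b)"
  by (rule sum.reindex_bij_betw[OF bbf_perm])

lemma row_dvd: "kk*ss dvd (\<Sum>y<ss. phi x y)"
proof -
  have "int (\<Sum>y<ss. phi x y) mod int kk = (\<Sum>y<ss. int (phi x y) mod int kk) mod int kk"
    unfolding of_nat_sum by (rule mod_sum_eq[symmetric])
  also have "\<dots> = (\<Sum>y<ss. ((int x - int hk) * wt hs (bbf x y)) mod int kk) mod int kk"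
    by (rule arg_cong[where f="\<lambda>z. z mod int kk"], rule sum.cong, rule refl, rule phi_mod_k)
  also have "\<dots> = (\<Sum>y<ss. (int x - int hk) * wt hs (bbf x y)) mod int kk"
    by (rule mod_sum_eq)
  also have "\<dots> = ((int x - int hk) * (\<Sum>y<ss. wt hs (bbf x y))) mod int kk"
    by (simp only: sum_distrib_left)
  also have "\<dots> = 0" using sum_wt_bbf by simp
  finally have "int kk dvd int (\<Sum>y<ss. phi x y)" by (simp add: dvd_eq_mod_eq_0)
  hence k: "kk dvd (\<Sum>y<ss. phi x y)" by (simp only: of_nat_dvd_iff)
  have "(\<Sum>y<ss. phi x y) mod ss = (\<Sum>y<ss. phi x y mod ss) mod ss" by (rule mod_sum_eq[symmetric])
  also have "\<dots> = (\<Sum>y<ss. bbf x y) mod ss" by (simp only: phi_props)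
  also have "\<dots> = (\<Sum>b<ss. b) mod ss" by (simp only: sum_bbf_row)
  also have "\<dots> = 0"
  proof -
    have "(\<Sum>b<ss. b) * 2 = ss * (ss - 1)" using gauss_nat_sum2[of ss] by simp
    hence "(\<Sum>b<ss. b) = ss * hs" by simp
    thus ?thesis by (simp only: mod_mult_self1_is_0)
  qed
  finally have s: "ss dvd (\<Sum>y<ss. phi x y)" by (simp add: dvd_eq_mod_eq_0)
  show ?thesis by (rule divides_mult[OF k s cop])
qed

lemma col_dvd: "kk*ss dvd (\<Sum>x<kk. phi x y)"
proof -
  have "int (\<Sum>x<kk. phi x y) mod int kk = (\<Sum>x<kk. int (phi x y) mod int kk) mod int kk"
    unfolding of_nat_sum by (rule mod_sum_eq[symmetric])
  also have "\<dots> = (\<Sum>x<kk. ((int x - int hk) * wt hs (bbf x y)) mod int kk) mod int kk"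
    by (rule arg_cong[where f="\<lambda>z. z mod int kk"], rule sum.cong, rule refl, rule phi_mod_k)
  also have "\<dots> = (\<Sum>x<kk. (int x - int hk) * wt hs (bbf x y)) mod int kk"
    by (rule mod_sum_eq)
  also have "(\<Sum>x<kk. (int x - int hk) * wt hs (bbf x y)) = 0"
  proof (rule antisym_sum)
    fix p assume p: "p \<le> 2*hk"
    have "bbf (2*hk - p) y = bbf p y" unfolding bbf_def using wt_sym[OF p] by simp
    moreover have "int (2*hk - p) - int hk = - (int p - int hk)" using p by (simp add: of_nat_diff)
    ultimately show "(int (2*hk - p) - int hk) * wt hs (bbf (2*hk - p) y) = - ((int p - int hk) * wt hs (bbf p y))"
      by (simp add: algebra_simps)
  qed
  finally have "int kk dvd int (\<Sum>x<kk. phi x y)" by (simp add: dvd_eq_mod_eq_0)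
  hence k: "kk dvd (\<Sum>x<kk. phi x y)" by (simp only: of_nat_dvd_iff)
  have "int (\<Sum>x<kk. phi x y) mod int ss = (\<Sum>x<kk. int (phi x y) mod int ss) mod int ss"
    unfolding of_nat_sum by (rule mod_sum_eq[symmetric])
  also have "\<dots> = (\<Sum>x<kk. (wt hk x * int y) mod int ss) mod int ss"
    by (rule arg_cong[where f="\<lambda>z. z mod int ss"], rule sum.cong, rule refl, rule phi_mod_s)
  also have "\<dots> = (\<Sum>x<kk. wt hk x * int y) mod int ss"
    by (rule mod_sum_eq)
  also have "\<dots> = ((\<Sum>x<kk. wt hk x) * int y) mod int ss"
    by (simp only: sum_distrib_right)
  also have "\<dots> = 0" using wt_sum[OF hk1] by simp
  finally have "int ss dvd int (\<Sum>x<kk. phi x y)" by (simp add: dvd_eq_mod_eq_0)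
  hence s: "ss dvd (\<Sum>x<kk. phi x y)" by (simp only: of_nat_dvd_iff)
  show ?thesis by (rule divides_mult[OF k s cop])
qed

definition RR :: "nat \<Rightarrow> int" where "RR x = int ((\<Sum>y<ss. phi x y) div (kk*ss))"
definition QQ :: "nat \<Rightarrow> int" where "QQ y = int ((\<Sum>x<kk. phi x y) div (kk*ss))"
definition TT :: int where "TT = (\<Sum>x<kk. RR x)"

lemma RR_eq: "(\<Sum>y<ss. int (phi x y)) = int (kk*ss) * RR x"
proof -
  have "(\<Sum>y<ss. phi x y) = kk*ss * ((\<Sum>y<ss. phi x y) div (kk*ss))" by (rule dvd_mult_div_cancel[OF row_dvd, symmetric])
  hence "int (\<Sum>y<ss. phi x y) = int (kk*ss) * RR x" unfolding RR_def by (metis of_nat_mult)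
  thus ?thesis by (simp only: of_nat_sum)
qed

lemma QQ_eq: "(\<Sum>x<kk. int (phi x y)) = int (kk*ss) * QQ y"
proof -
  have "(\<Sum>x<kk. phi x y) = kk*ss * ((\<Sum>x<kk. phi x y) div (kk*ss))" by (rule dvd_mult_div_cancel[OF col_dvd, symmetric])
  hence "int (\<Sum>x<kk. phi x y) = int (kk*ss) * QQ y" unfolding QQ_def by (metis of_nat_mult)
  thus ?thesis by (simp only: of_nat_sum)
qed

lemma QQ_sum: "(\<Sum>y<ss. QQ y) = TT"
proof -
  have "(\<Sum>y<ss. QQ y) = int (\<Sum>y<ss. (\<Sum>x<kk. phi x y) div (kk*ss))" unfolding QQ_def by (simp only: of_nat_sum)
  also have "(\<Sum>y<ss. (\<Sum>x<kk. phi x y) div (kk*ss)) = (\<Sum>y<ss. \<Sum>x<kk. phi x y) div (kk*ss)"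
    by (rule sum_div_dvd) (rule col_dvd)
  also have "(\<Sum>y<ss. \<Sum>x<kk. phi x y) = (\<Sum>x<kk. \<Sum>y<ss. phi x y)" by (rule sum.swap)
  also have "(\<Sum>x<kk. \<Sum>y<ss. phi x y) div (kk*ss) = (\<Sum>x<kk. (\<Sum>y<ss. phi x y) div (kk*ss))"
    by (rule sum_div_dvd[symmetric]) (rule row_dvd)
  also have "int \<dots> = TT" unfolding TT_def RR_def by (simp only: of_nat_sum)
  finally show ?thesis .
qed

definition om :: "nat \<Rightarrow> nat \<Rightarrow> int" where
  "om x y = - (if y = 0 then RR x else 0) - (if x = 0 then QQ y else 0) + (if x = 0 \<and> y = 0 then TT else 0)"

lemma om_row: "(\<Sum>y<ss. om x y) = - RR x"
proof -
  have "(\<Sum>y<ss. om x y) = - (\<Sum>y<ss. if y = 0 then RR x else 0) - (\<Sum>y<ss. if x = 0 then QQ y else 0)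
        + (\<Sum>y<ss. if x = 0 \<and> y = 0 then TT else 0)"
    unfolding om_def by (simp only: sum.distrib sum_subtractf sum_negf)
  also have "(\<Sum>y<ss. if y = 0 then RR x else 0) = RR x" by (rule sum_delta0) simp
  also have "(\<Sum>y<ss. if x = 0 then QQ y else 0) = (if x = 0 then TT else 0)" using QQ_sum by simp
  also have "(\<Sum>y<ss. if x = 0 \<and> y = 0 then TT else 0) = (if x = 0 then TT else 0)"
    by (cases "x = 0") (simp_all add: sum_delta0)
  finally show ?thesis by simp
qed

lemma om_col: "(\<Sum>x<kk. om x y) = - QQ y"
proof -
  have "(\<Sum>x<kk. om x y) = - (\<Sum>x<kk. if y = 0 then RR x else 0) - (\<Sum>x<kk. if x = 0 then QQ y else 0)
        + (\<Sum>x<kk. if x = 0 \<and> y = 0 then TT else 0)"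
    unfolding om_def by (simp only: sum.distrib sum_subtractf sum_negf)
  also have "(\<Sum>x<kk. if x = 0 then QQ y else 0) = QQ y" by (rule sum_delta0) simp
  also have "(\<Sum>x<kk. if y = 0 then RR x else 0) = (if y = 0 then TT else 0)" unfolding TT_def by simp
  also have "(\<Sum>x<kk. if x = 0 \<and> y = 0 then TT else 0) = (if y = 0 then TT else 0)"
    by (cases "y = 0") (simp_all add: sum_delta0)
  finally show ?thesis by simp
qed

lemma caseB:
  fixes g c :: nat
  assumes g0: "0 < g" and oC: "odd (g*c)" and c0: "0 < c"
  shows "\<exists>A. is_MS0_Zmod (c*(g*kk)*(1*ss)) (g*kk) (g*ss) (1*ss) (1*kk) c A"
proof -
  define C where "C = g*c"
  define D where "D = kk*ss"
  have g1: "1 \<le> g" using g0 by simp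
  have C0: "0 < C" using g0 c0 C_def by simp
  have oCi: "odd (int C)" using oC C_def by simp
  have NDC: "int (c*(g*kk)*(1*ss)) = int D * int C" unfolding D_def C_def by (simp add: algebra_simps)
  define F where "F = (\<lambda>r j::nat. (int j - int r) mod int g < int (1::nat))"
  define rho where "rho = (\<lambda>x y. wt hk x * wt hs y)"
  define V where "V = (\<lambda>i r j. int (phi (r div g) (j div g)) + int D * ((rho (r div g) (j div g) * int (i*g + r mod g) + om (r div g) (j div g)) mod int C))"
  have Fmod: "\<And>r j. F r j \<Longrightarrow> j mod g = r mod g"
  proof -
    fix r j assume "F r j"
    hence a: "(int j - int r) mod int g < 1" unfolding F_def by simp
    have "0 \<le> (int j - int r) mod int g" using g0 by simp
    hence "(int j - int r) mod int g = 0" using a by linarith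
    hence "int j mod int g = int r mod int g" by (simp add: mod_eq_dvd_iff dvd_eq_mod_eq_0)
    thus "j mod g = r mod g" by (simp add: zmod_int[symmetric])
  qed
  have cardR: "\<And>r. r < g*kk \<Longrightarrow> card {j. j < g*ss \<and> F r j} = 1*ss"
  proof -
    fix r
    have "card ({..<1::nat} \<times> {..<ss}) = card {j. j < g*ss \<and> F r j}"
      using bij_betw_same_card[OF row_param[OF g0 g1, of r ss]] unfolding F_def .
    hence "card {j. j < g*ss \<and> F r j} = card ({..<1::nat} \<times> {..<ss})" by (rule sym)
    also have "\<dots> = 1*ss" by (simp only: card_cartesian_product card_lessThan)
    finally show "card {j. j < g*ss \<and> F r j} = 1*ss" .
  qed
  have cardC: "\<And>j. j < g*ss \<Longrightarrow> card {r. r < g*kk \<and> F r j} = 1*kk"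
  proof -
    fix j
    have "card ({..<1::nat} \<times> {..<kk}) = card {r. r < g*kk \<and> F r j}"
      using bij_betw_same_card[OF col_param[OF g0 g1, of j kk]] unfolding F_def .
    hence "card {r. r < g*kk \<and> F r j} = card ({..<1::nat} \<times> {..<kk})" by (rule sym)
    also have "\<dots> = 1*kk" by (simp only: card_cartesian_product card_lessThan)
    finally show "card {r. r < g*kk \<and> F r j} = 1*kk" .
  qed
  have iota: "\<And>i r. i < c \<Longrightarrow> i*g + r mod g < C"
  proof -
    fix i r assume i: "i < c"
    have "i*g + r mod g < i*g + g" using g0 by simp
    also have "\<dots> = (i+1)*g" by simp
    also have "\<dots> \<le> c*g" using i by (intro mult_le_mono1) simp
    finally show "i*g + r mod g < C" unfolding C_def by (simp add: mult.commute)
  qed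
  have Vdecomp: "\<And>i r j. 0 \<le> V i r j \<and> V i r j mod int D = int (phi (r div g) (j div g))
        \<and> V i r j div int D = (rho (r div g) (j div g) * int (i*g + r mod g) + om (r div g) (j div g)) mod int C
        \<and> V i r j < int D * int C"
  proof -
    fix i r j
    define P where "P = int (phi (r div g) (j div g))"
    define W where "W = (rho (r div g) (j div g) * int (i*g + r mod g) + om (r div g) (j div g)) mod int C"
    have P1: "0 \<le> P" unfolding P_def by simp
    have P2: "P < int D" unfolding P_def D_def using phi_props(1)[of "r div g" "j div g"] by (simp only: of_nat_less_iff)
    note P = P1 P2
    have W: "0 \<le> W" "W \<le> int C - 1" unfolding W_def using C0 by auto
    have VV: "V i r j = P + int D * W" unfolding V_def P_def W_def by simp
    have "int D * W \<le> int D * (int C - 1)" using W by (intro mult_left_mono) auto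
    hence lt: "V i r j < int D * int C" using VV P by (simp add: algebra_simps)
    have m: "V i r j mod int D = P" using VV P by simp
    have d: "V i r j div int D = W" using VV P by simp
    show "0 \<le> V i r j \<and> V i r j mod int D = int (phi (r div g) (j div g))
        \<and> V i r j div int D = (rho (r div g) (j div g) * int (i*g + r mod g) + om (r div g) (j div g)) mod int C
        \<and> V i r j < int D * int C"
      using VV P W m d lt unfolding P_def W_def by simp
  qed
  have range: "\<And>i r j. i < c \<Longrightarrow> r < g*kk \<Longrightarrow> j < g*ss \<Longrightarrow> F r j \<Longrightarrow> 0 \<le> V i r j \<and> V i r j < int (c*(g*kk)*(1*ss))"
    using Vdecomp NDC by simp
  have coprho: "\<And>x y. coprime (rho x y) (int C)"
    unfolding rho_def using coprime_wt[OF oCi] by (simp add: coprime_mult_left_iff)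
  have inj: "\<And>i r j i' r' j'. i<c \<Longrightarrow> r<g*kk \<Longrightarrow> j<g*ss \<Longrightarrow> F r j \<Longrightarrow> i'<c \<Longrightarrow> r'<g*kk \<Longrightarrow> j'<g*ss \<Longrightarrow> F r' j'
              \<Longrightarrow> V i r j = V i' r' j' \<Longrightarrow> i = i' \<and> r = r' \<and> j = j'"
  proof -
    fix i r j i' r' j'
    assume a: "i<c" "r<g*kk" "j<g*ss" "F r j" and b: "i'<c" "r'<g*kk" "j'<g*ss" "F r' j'"
      and eqV: "V i r j = V i' r' j'"
    have x1: "r div g < kk" using a(2) g0 by (simp add: div_less_iff_less_mult mult.commute)
    have x2: "r' div g < kk" using b(2) g0 by (simp add: div_less_iff_less_mult mult.commute)
    have y1: "j div g < ss" using a(3) g0 by (simp add: div_less_iff_less_mult mult.commute)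
    have y2: "j' div g < ss" using b(3) g0 by (simp add: div_less_iff_less_mult mult.commute)
    have "int (phi (r div g) (j div g)) = int (phi (r' div g) (j' div g))"
      using Vdecomp[of i r j] Vdecomp[of i' r' j'] eqV by simp
    hence "phi (r div g) (j div g) = phi (r' div g) (j' div g)" by simp
    hence xy: "r div g = r' div g \<and> j div g = j' div g" using phi_inj[OF x1 y1 x2 y2] by simp
    have "(rho (r div g) (j div g) * int (i*g + r mod g) + om (r div g) (j div g)) mod int C
        = (rho (r div g) (j div g) * int (i'*g + r' mod g) + om (r div g) (j div g)) mod int C"
      using Vdecomp[of i r j] Vdecomp[of i' r' j'] eqV xy by simp
    note eqW = this
    have u1: "int (i*g + r mod g) < int C" using iota[OF a(1)] by (simp only: of_nat_less_iff)
    have u2: "int (i'*g + r' mod g) < int C" using iota[OF b(1)] by (simp only: of_nat_less_iff)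
    have "int (i*g + r mod g) = int (i'*g + r' mod g)"
      by (rule affine_inj[OF coprho of_nat_0_le_iff u1 of_nat_0_le_iff u2 eqW])
    hence io: "i*g + r mod g = i'*g + r' mod g" by (simp only: of_nat_eq_iff)
    have d1: "(i*g + r mod g) div g = i" using g0 by simp
    have d2: "(i'*g + r' mod g) div g = i'" using g0 by simp
    have ii: "i = i'" using io d1 d2 by simp
    have m1: "(i*g + r mod g) mod g = r mod g" by simp
    have m2: "(i'*g + r' mod g) mod g = r' mod g" by simp
    have rm: "r mod g = r' mod g" using io m1 m2 by simp
    have "r = r div g * g + r mod g" "r' = r' div g * g + r' mod g" by simp_all
    hence rr: "r = r'" using rm xy by simp
    have jm: "j mod g = j' mod g" using Fmod[OF a(4)] Fmod[OF b(4)] rm by simp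
    have "j = j div g * g + j mod g" "j' = j' div g * g + j' mod g" by simp_all
    hence "j = j'" using jm xy by simp
    thus "i = i' \<and> r = r' \<and> j = j'" using ii rr by simp
  qed
  have NN: "int (c*(g*kk)*(1*ss)) = int D * int C" by (rule NDC)
  have rows: "\<And>i r. i<c \<Longrightarrow> r<g*kk \<Longrightarrow> (\<Sum>j\<in>{j. j<g*ss \<and> F r j}. V i r j) mod int (c*(g*kk)*(1*ss)) = 0"
  proof -
    fix i r assume ir: "i < c" "r < g*kk"
    define x where "x = r div g"
    define io where "io = int (i*g + r mod g)"
    have bij: "bij_betw (\<lambda>(e,t). g*t + (r+e) mod g) ({..<1::nat} \<times> {..<ss}) {j. j < g*ss \<and> F r j}"
      using row_param[OF g0 g1, of r ss] unfolding F_def .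
    have "(\<Sum>j\<in>{j. j<g*ss \<and> F r j}. V i r j) = (\<Sum>p\<in>{..<1::nat} \<times> {..<ss}. V i r ((\<lambda>(e,t). g*t + (r+e) mod g) p))"
      by (rule sum.reindex_bij_betw[OF bij, symmetric])
    also have "\<dots> = (\<Sum>e<1::nat. \<Sum>t<ss. V i r (g*t + (r+e) mod g))"
      by (simp only: sum.cartesian_product' case_prod_conv)
    also have "\<dots> = (\<Sum>t<ss. V i r (g*t + r mod g))" by simp
    also have "\<dots> = (\<Sum>t<ss. int (phi x t) + int D * ((rho x t * io + om x t) mod int C))"
    proof (rule sum.cong)
      fix t
      have "(g*t + r mod g) div g = t" "(g*t + r mod g) mod g = r mod g" using g0 by simp_all
      thus "V i r (g*t + r mod g) = int (phi x t) + int D * ((rho x t * io + om x t) mod int C)"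
        unfolding V_def x_def io_def by simp
    qed simp
    finally have S: "(\<Sum>j\<in>{j. j<g*ss \<and> F r j}. V i r j) = (\<Sum>t<ss. int (phi x t) + int D * ((rho x t * io + om x t) mod int C))" .
    have "(\<Sum>t<ss. int (phi x t) + int D * (rho x t * io + om x t))
        = (\<Sum>t<ss. int (phi x t)) + int D * (io * (wt hk x * (\<Sum>t<ss. wt hs t)) + (\<Sum>t<ss. om x t))"
      unfolding rho_def by (simp only: sum.distrib sum_distrib_left algebra_simps)
    also have "\<dots> = 0" unfolding RR_eq om_row D_def using wt_sum[OF hs1] by simp
    finally have Z: "(\<Sum>t<ss. int (phi x t) + int D * (rho x t * io + om x t)) = 0" .
    show "(\<Sum>j\<in>{j. j<g*ss \<and> F r j}. V i r j) mod int (c*(g*kk)*(1*ss)) = 0"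
      unfolding S NN sum_mod_reduce Z by simp
  qed
  have cols: "\<And>i j. i<c \<Longrightarrow> j<g*ss \<Longrightarrow> (\<Sum>r\<in>{r. r<g*kk \<and> F r j}. V i r j) mod int (c*(g*kk)*(1*ss)) = 0"
  proof -
    fix i j assume ij: "i < c" "j < g*ss"
    define y where "y = j div g"
    define io where "io = int (i*g + j mod g)"
    have bij: "bij_betw (\<lambda>(e,q). g*q + nat ((int j - int e) mod int g)) ({..<1::nat} \<times> {..<kk}) {r. r < g*kk \<and> F r j}"
      using col_param[OF g0 g1, of j kk] unfolding F_def .
    have "(\<Sum>r\<in>{r. r<g*kk \<and> F r j}. V i r j) = (\<Sum>p\<in>{..<1::nat} \<times> {..<kk}. V i ((\<lambda>(e,q). g*q + nat ((int j - int e) mod int g)) p) j)"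
      by (rule sum.reindex_bij_betw[OF bij, symmetric])
    also have "\<dots> = (\<Sum>e<1::nat. \<Sum>q<kk. V i (g*q + nat ((int j - int e) mod int g)) j)"
      by (simp only: sum.cartesian_product' case_prod_conv)
    also have "\<dots> = (\<Sum>q<kk. V i (g*q + j mod g) j)" by (simp add: zmod_int[symmetric])
    also have "\<dots> = (\<Sum>q<kk. int (phi q y) + int D * ((rho q y * io + om q y) mod int C))"
    proof (rule sum.cong)
      fix q
      have "(g*q + j mod g) div g = q" "(g*q + j mod g) mod g = j mod g" using g0 by simp_all
      thus "V i (g*q + j mod g) j = int (phi q y) + int D * ((rho q y * io + om q y) mod int C)"
        unfolding V_def y_def io_def by simp
    qed simp
    finally have S: "(\<Sum>r\<in>{r. r<g*kk \<and> F r j}. V i r j) = (\<Sum>q<kk. int (phi q y) + int D * ((rho q y * io + om q y) mod int C))" .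
    have "(\<Sum>q<kk. int (phi q y) + int D * (rho q y * io + om q y))
        = (\<Sum>q<kk. int (phi q y)) + int D * (io * ((\<Sum>q<kk. wt hk q) * wt hs y) + (\<Sum>q<kk. om q y))"
      unfolding rho_def by (simp only: sum.distrib sum_distrib_left sum_distrib_right algebra_simps)
    also have "\<dots> = 0" unfolding QQ_eq om_col D_def using wt_sum[OF hk1] by simp
    finally have Z: "(\<Sum>q<kk. int (phi q y) + int D * (rho q y * io + om q y)) = 0" .
    show "(\<Sum>r\<in>{r. r<g*kk \<and> F r j}. V i r j) mod int (c*(g*kk)*(1*ss)) = 0"
      unfolding S NN sum_mod_reduce Z by simp
  qed
  show ?thesis by (rule construct[OF cardR cardC refl range inj rows cols])
qed

end



theorem mainTheorem8:
  fixes m n s k c :: nat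
  assumes "0 < m" "0 < n" "0 < s" "0 < k" "0 < c"
    and "2 \<le> s" "s \<le> n" "2 \<le> k" "k \<le> m" "m * s = n * k"
  shows "MS0_exists m n s k c \<longleftrightarrow> odd (n * k * c)"
proof
  assume "MS0_exists m n s k c"
  then obtain A where "is_MS0_Zmod (n * k * c) m n s k c A" unfolding MS0_exists_def by blast
  thus "odd (n * k * c)" by (rule necessity) (use assms in simp)
next
  assume od: "odd (n * k * c)"
  have on: "odd n" and ok: "odd k" and oc: "odd c" using od by auto
  have "odd (m * s)" using assms(10) on ok by simp
  hence om: "odd m" and os: "odd s" by auto
  define g where "g = gcd m n"
  define m' where "m' = m div g"
  define n' where "n' = n div g"
  have g0: "0 < g" using assms(1) g_def by simp
  have mg: "m = g * m'" unfolding m'_def g_def by simp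
  have ng: "n = g * n'" unfolding n'_def g_def by simp
  have m0: "0 < m'" using mg assms(1) by (cases m') auto
  have n0: "0 < n'" using ng assms(2) by (cases n') auto
  have copmn: "coprime m' n'"
    unfolding m'_def n'_def g_def using assms(1) by (simp add: div_gcd_coprime)
  have "g * (m' * s) = g * (n' * k)" using assms(10) mg ng by (simp add: algebra_simps)
  hence e1: "m' * s = n' * k" using g0 by simp
  have "n' dvd m' * s" using e1 by simp
  hence "n' dvd s" using copmn by (simp add: coprime_commute coprime_dvd_mult_right_iff)
  then obtain d where sd: "s = n' * d" by blast
  have kd: "k = m' * d" using e1 sd n0 by (simp add: algebra_simps)
  have dpos: "0 < d" using sd assms(3) by (cases d) auto
  have "n' * d \<le> n' * g" using assms(7) sd ng by (simp add: algebra_simps)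
  hence dg: "d \<le> g" using n0 by simp
  have od': "odd d" using os sd by simp
  have og: "odd g" using on ng by simp
  have on': "odd n'" using on ng by simp
  have om': "odd m'" using om mg by simp
  show "MS0_exists m n s k c"
  proof (cases "d = 1")
    case True
    have sn: "s = n'" and km: "k = m'" using sd kd True by simp_all
    obtain hk where hk: "k = 2*hk+1" using ok by (metis oddE)
    obtain hs where hs: "s = 2*hs+1" using os by (metis oddE)
    have hk1: "1 \<le> hk" using hk assms(8) by simp
    have hs1: "1 \<le> hs" using hs assms(6) by simp
    have cop: "coprime (2*hk+1) (2*hs+1)" using copmn sn km hk hs by (simp add: coprime_commute)
    interpret B: caseB_loc hk hs using hk1 hs1 cop by unfold_locales
    have "\<exists>A. is_MS0_Zmod (c*(g*(2*hk+1))*(1*(2*hs+1))) (g*(2*hk+1)) (g*(2*hs+1)) (1*(2*hs+1)) (1*(2*hk+1)) c A"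
      by (rule B.caseB[OF g0]) (use og oc assms(5) in simp_all)
    moreover have "c*(g*(2*hk+1))*(1*(2*hs+1)) = n * k * c" using ng sn hk hs km by (simp add: algebra_simps)
    moreover have "g*(2*hk+1) = m" using mg km hk by simp
    moreover have "g*(2*hs+1) = n" using ng sn hs by simp
    ultimately show ?thesis unfolding MS0_exists_def using hk hs by simp
  next
    case False
    obtain h where h: "d = 2*h+1" using od' by (metis oddE)
    have h1: "1 \<le> h" using h False by simp
    have "\<exists>A. is_MS0_Zmod (c*(g*m')*((2*h+1)*n')) (g*m') (g*n') ((2*h+1)*n') ((2*h+1)*m') c A"
      by (rule caseA[OF g0 _ h1 om' _ assms(5) m0 n0]) (use dg h oc og on' om' in simp_all)
    moreover have "c*(g*m')*((2*h+1)*n') = n * k * c" using ng kd h by (simp add: algebra_simps)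
    ultimately show ?thesis unfolding MS0_exists_def using mg ng sd kd h by (simp add: algebra_simps)
  qed
qed


end
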